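(* Let $\varepsilon>0$, $\alpha_3,\beta_3\in\mathbb R$, and set $\gamma=\frac{1}{\sqrt{1+\varepsilon}}$, $\mu_2=\frac12\sqrt{\frac{\varepsilon}{1+\varepsilon}}$, $\mu_1=\frac{\sqrt\varepsilon}{2}$, so that $W$ has the simple eigenvalues $\pm i$ and $\pm\frac{i}{\sqrt{1+\varepsilon}}$. Let $\delta_{1,2}$ and $\delta_{3,4}$ denote the cubic normal-form coefficients (defined in the context) associated with the eigenvalues $\lambda=i$ and $\lambda=\frac{i}{\sqrt{1+\varepsilon}}$, respectively. Then there exist constants $\kappa_1,\kappa_2>0$ (depending only on $\varepsilon$ and on the normalization of the eigenvectors) such that $$\delta_{1,2}=\kappa_1\Big(-\frac{\varepsilon\sqrt{\varepsilon}}{1+\varepsilon}+\frac{3\sqrt{\varepsilon}}{1+\varepsilon}\alpha_3-\frac{3(1+\varepsilon)}{\sqrt{\varepsilon}}\beta_3\Big),\qquad \delta_{3,4}=\kappa_2\Big(-\sqrt{\varepsilon}\,\alpha_3+\frac{(1+\varepsilon)^2}{\sqrt{\varepsilon}}\beta_3\Big).$$ In particular, in both coefficients the ratio of the coefficient of $\alpha_3$ to that of $\beta_3$ equals $-\frac{\varepsilon}{(1+\varepsilon)^2}$, so that if $\beta_3=\frac{\varepsilon}{(1+\varepsilon)^2}\alpha_3$ then $\delta_{1,2}=-\kappa_1\frac{\varepsilon\sqrt\varepsilon}{1+\varepsilon}<0$ and $\delta_{3,4}=0$, independently of $\alpha_3$.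
   Context: The coupled Van der Pol–Duffing oscillator / nonlinear absorber system, in dimensionless form with state $x=(x_1,x_2,x_3,x_4)=(q_1,\dot q_1,q_1-q_2,\dot q_1-\dot q_2)$, is $\dot x=Wx+b(x)$, where $$W=\begin{pmatrix}0&1&0&0\\ -1&2\mu_1&-\gamma^2\varepsilon&-2\mu_2\gamma\varepsilon\\ 0&0&0&1\\ -1&2\mu_1&-\gamma^2(1+\varepsilon)&-2\mu_2\gamma(1+\varepsilon)\end{pmatrix},\quad b(x)=\begin{pmatrix}0\\ -2\mu_1x_1^2x_2-\alpha_3x_1^3-\beta_3\varepsilon x_3^3\\ 0\\ -2\mu_1x_1^2x_2-\alpha_3x_1^3-\beta_3(1+\varepsilon)x_3^3\end{pmatrix},$$ with $\varepsilon>0$ the mass ratio, $\alpha_3$ the primary cubic stiffness coefficient and $\beta_3$ the absorber cubic stiffness coefficient. For a simple purely imaginary eigenvalue $\lambda$ of $W$ with right eigenvector $v$ ($Wv=\lambda v$) and left eigenvector $w$ ($w^TW=\lambda w^T$, $w^Tv\neq0$), define $c_\lambda$ as the coefficient of $z^2\bar z$ in the polynomial $w^T b(vz+\bar v\bar z)$ in the variables $z,\bar z$, divided by $w^Tv$, and set $\delta=\mathrm{Re}\,c_\lambda$. This is the coefficient in the (single-pair, cubic-order) Hopf normal form $\dot r=(\mathrm{Re}\lambda) r+\delta r^3$; rescaling $v$ by $k\neq0$ multiplies $\delta$ by $|k|^2$, so its sign is normalization independent. $\delta<0$ corresponds to a supercritical and $\delta>0$ to a subcritical Hopf bifurcation.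 *)

theory Defs
  imports "Jordan_Normal_Form.Char_Poly"
begin

text \<open>The linear part W (complexified), rows as in the paper; state indices 0..3
  correspond to x1..x4.\<close>
definition Wmat :: "real \<Rightarrow> real \<Rightarrow> real \<Rightarrow> real \<Rightarrow> complex mat" where
  "Wmat mu1 mu2 gam eps = map_mat complex_of_real (mat_of_rows_list 4
     [[0, 1, 0, 0],
      [-1, 2*mu1, -(gam^2)*eps, -2*mu2*gam*eps],
      [0, 0, 0, 1],
      [-1, 2*mu1, -(gam^2)*(1+eps), -2*mu2*gam*(1+eps)]])"

text \<open>The cubic nonlinearity b, evaluated on complex vectors (polynomial extension).\<close>
definition bnl :: "real \<Rightarrow> real \<Rightarrow> real \<Rightarrow> real \<Rightarrow> complex vec \<Rightarrow> complex vec" where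
  "bnl mu1 a3 b3 eps x = vec_of_list
     [0,
      - 2*of_real mu1*(x$0)^2*(x$1) - of_real a3*(x$0)^3 - of_real b3*of_real eps*(x$2)^3,
      0,
      - 2*of_real mu1*(x$0)^2*(x$1) - of_real a3*(x$0)^3 - of_real b3*of_real (1+eps)*(x$2)^3]"

definition left_eigenvector :: "'a :: comm_ring_1 mat \<Rightarrow> 'a vec \<Rightarrow> 'a \<Rightarrow> bool" where
  "left_eigenvector A w k = eigenvector (transpose_mat A) w k"

definition coeff_z2zb :: "(complex \<Rightarrow> complex \<Rightarrow> complex) \<Rightarrow> complex" where
  "coeff_z2zb P = (THE c. \<exists>(a :: nat \<Rightarrow> nat \<Rightarrow> complex) N.
      (\<forall>z zb. P z zb = (\<Sum>j\<le>N. \<Sum>k\<le>N. a j k * z^j * zb^k)) \<and> c = a 2 1)"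

definition c_lambda :: "real \<Rightarrow> real \<Rightarrow> real \<Rightarrow> real \<Rightarrow> complex vec \<Rightarrow> complex vec \<Rightarrow> complex" where
  "c_lambda mu1 a3 b3 eps v w =
     coeff_z2zb (\<lambda>z zb. w \<bullet> bnl mu1 a3 b3 eps (z \<cdot>\<^sub>v v + zb \<cdot>\<^sub>v map_vec cnj v)) / (w \<bullet> v)"

definition delta_nf :: "real \<Rightarrow> real \<Rightarrow> real \<Rightarrow> real \<Rightarrow> complex vec \<Rightarrow> complex vec \<Rightarrow> real" where
  "delta_nf mu1 a3 b3 eps v w = Re (c_lambda mu1 a3 b3 eps v w)"

definition gam_of :: "real \<Rightarrow> real" where "gam_of eps = 1 / sqrt (1 + eps)"
definition mu2_of :: "real \<Rightarrow> real" where "mu2_of eps = sqrt (eps / (1 + eps)) / 2"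
definition mu1_of :: "real \<Rightarrow> real" where "mu1_of eps = sqrt eps / 2"

end

theory Submission
  imports Defs
begin


lemma two_var:
  fixes d :: "nat \<Rightarrow> nat \<Rightarrow> complex"
  assumes h: "\<And>z zb. (\<Sum>j\<le>M. \<Sum>k\<le>M. d j k * z^j * zb^k) = 0" and "j \<le> M" "k \<le> M"
  shows "d j k = 0"
proof -
  have "(\<Sum>k\<le>M. d j k * zb^k) = 0" for zb
  proof (rule zero_polynom_imp_zero_coeffs[where n=M and c="\<lambda>i. \<Sum>k\<le>M. d i k * zb^k" and k=j, simplified])
    fix z :: complex
    have "(\<Sum>i\<le>M. (\<Sum>k\<le>M. d i k * zb^k) * z^i) = (\<Sum>j\<le>M. \<Sum>k\<le>M. d j k * z^j * zb^k)"
      unfolding sum_distrib_right by (intro sum.cong refl) (simp add: mult_ac)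
    then show "(\<Sum>i\<le>M. (\<Sum>k\<le>M. d i k * zb^k) * z^i) = 0" using h by simp
  qed (use assms in auto)
  then show ?thesis by (rule zero_polynom_imp_zero_coeffs[where n=M and c="\<lambda>k. d j k", simplified]) (use assms in auto)
qed

lemma pad:
  fixes a :: "nat \<Rightarrow> nat \<Rightarrow> complex"
  assumes "N \<le> M"
  shows "(\<Sum>j\<le>N. \<Sum>k\<le>N. a j k * z^j * zb^k) =
         (\<Sum>j\<le>M. \<Sum>k\<le>M. (if j \<le> N \<and> k \<le> N then a j k else 0) * z^j * zb^k)"
proof -
  have inner: "(\<Sum>k\<le>M. (if j \<le> N \<and> k \<le> N then a j k else 0) * z^j * zb^k)
      = (if j \<le> N then (\<Sum>k\<le>N. a j k * z^j * zb^k) else 0)" for j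
  proof (cases "j \<le> N")
    case True
    have "(\<Sum>k\<le>M. (if j \<le> N \<and> k \<le> N then a j k else 0) * z^j * zb^k)
        = (\<Sum>k\<le>N. (if j \<le> N \<and> k \<le> N then a j k else 0) * z^j * zb^k)"
      by (rule sum.mono_neutral_right) (use assms in auto)
    then show ?thesis using True by simp
  qed simp
  have "(\<Sum>j\<le>M. \<Sum>k\<le>M. (if j \<le> N \<and> k \<le> N then a j k else 0) * z^j * zb^k)
      = (\<Sum>j\<le>M. (if j \<le> N then (\<Sum>k\<le>N. a j k * z^j * zb^k) else 0))"
    by (simp only: inner)
  also have "\<dots> = (\<Sum>j\<le>N. (if j \<le> N then (\<Sum>k\<le>N. a j k * z^j * zb^k) else 0))"
    by (rule sum.mono_neutral_right) (use assms in auto)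
  finally show ?thesis by simp
qed

lemma coeff_rep:
  assumes rep: "\<And>z zb. P z zb = (\<Sum>j\<le>3. \<Sum>k\<le>3. p j k * z^j * zb^k)"
    and nz: "p 3 0 \<noteq> 0 \<or> p 2 1 \<noteq> 0"
  shows "coeff_z2zb P = p 2 1"
  unfolding coeff_z2zb_def
proof (rule the_equality)
  show "\<exists>a N. (\<forall>z zb. P z zb = (\<Sum>j\<le>N. \<Sum>k\<le>N. a j k * z ^ j * zb ^ k)) \<and> p 2 1 = a 2 1"
    using rep by blast
next
  fix c assume "\<exists>a N. (\<forall>z zb. P z zb = (\<Sum>j\<le>N. \<Sum>k\<le>N. a j k * z ^ j * zb ^ k)) \<and> c = a 2 1"
  then obtain a N where repa: "\<And>z zb. P z zb = (\<Sum>j\<le>N. \<Sum>k\<le>N. a j k * z ^ j * zb ^ k)"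
    and c: "c = a 2 1" by blast
  define M where "M = max N 3"
  define d where "d j k = (if j \<le> 3 \<and> k \<le> 3 then p j k else 0) - (if j \<le> N \<and> k \<le> N then a j k else 0)" for j k
  have "(\<Sum>j\<le>M. \<Sum>k\<le>M. d j k * z^j * zb^k) = 0" for z zb
  proof -
    have "(\<Sum>j\<le>M. \<Sum>k\<le>M. d j k * z^j * zb^k) =
      (\<Sum>j\<le>M. \<Sum>k\<le>M. (if j \<le> 3 \<and> k \<le> 3 then p j k else 0) * z^j * zb^k) -
      (\<Sum>j\<le>M. \<Sum>k\<le>M. (if j \<le> N \<and> k \<le> N then a j k else 0) * z^j * zb^k)"
      unfolding d_def by (simp add: left_diff_distrib sum_subtractf)
    also have "\<dots> = P z zb - P z zb"
      using pad[of 3 M p z zb] pad[of N M a z zb] rep repa M_def by simp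
    finally show ?thesis by simp
  qed
  then have d0: "\<And>j k. j \<le> M \<Longrightarrow> k \<le> M \<Longrightarrow> d j k = 0"
    using two_var by blast
  show "c = p 2 1"
  proof (cases "N \<ge> 2")
    case True
    then show ?thesis using d0[of 2 1] c unfolding d_def M_def by simp
  next
    case False
    then show ?thesis using d0[of 3 0] d0[of 2 1] nz unfolding d_def M_def by auto
  qed
qed

definition cub :: "complex \<Rightarrow> complex \<Rightarrow> complex \<Rightarrow> complex \<Rightarrow> complex \<Rightarrow> complex \<Rightarrow> complex \<Rightarrow> complex \<Rightarrow> complex \<Rightarrow> nat \<Rightarrow> nat \<Rightarrow> complex" where
  "cub K1 K2 K3 a a' b b' c c' j k = (if j=3 \<and> k=0 then K1*a^2*b + K2*a^3 + K3*c^3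
     else if j=2 \<and> k=1 then K1*(a^2*b' + 2*a*a'*b) + 3*K2*a^2*a' + 3*K3*c^2*c'
     else if j=1 \<and> k=2 then K1*(2*a*a'*b' + a'^2*b) + 3*K2*a*a'^2 + 3*K3*c*c'^2
     else if j=0 \<and> k=3 then K1*a'^2*b' + K2*a'^3 + K3*c'^3 else 0)"

lemma cub_rep: "K1*(a*z+a'*zb)^2*(b*z+b'*zb) + K2*(a*z+a'*zb)^3 + K3*(c*z+c'*zb)^3
   = (\<Sum>j\<le>3. \<Sum>k\<le>3. cub K1 K2 K3 a a' b b' c c' j k * z^j * zb^k)"
  by (simp add: numeral_3_eq_3 atMost_Suc cub_def) (simp add: power2_eq_square power3_eq_cube algebra_simps)

lemma sum4: "(\<Sum>i\<in>{0..<4::nat}. f i) = f 0 + f 1 + f 2 + (f 3::'a::comm_monoid_add)"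
  by (simp add: numeral_eq_Suc add.assoc)

lemma P_expand:
  assumes "dim_vec v = 4"
  shows "w \<bullet> bnl m a3 b3 e (z \<cdot>\<^sub>v v + zb \<cdot>\<^sub>v map_vec cnj v)
    = (-(w$1+w$3)*(2*of_real m))*(v$0*z+cnj (v$0)*zb)^2*(v$1*z+cnj (v$1)*zb)
      + (-(w$1+w$3)*of_real a3)*(v$0*z+cnj (v$0)*zb)^3
      + (-of_real b3*(of_real e*w$1 + of_real (1+e)*w$3))*(v$2*z+cnj (v$2)*zb)^3"
  using assms by (simp add: bnl_def scalar_prod_def sum4) (simp add: algebra_simps numeral_eq_Suc)

lemma dimW: "dim_row (Wmat m1 m2 g e) = 4" "dim_col (Wmat m1 m2 g e) = 4"
  by (simp_all add: Wmat_def mat_of_rows_list_def)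

lemma Wv: assumes "dim_vec v = 4"
  shows "Wmat m1 m2 g e *\<^sub>v v = vec_of_list [v$1,
     -v$0 + of_real (2*m1)*v$1 - of_real (g^2*e) * v$2 - of_real (2*m2*g*e)*v$3,
     v$3,
     -v$0 + of_real (2*m1)*v$1 - of_real (g^2*(1+e)) * v$2 - of_real (2*m2*g*(1+e))*v$3]"
  apply (rule eq_vecI)
  using assms apply (simp_all add: dimW)
  apply (auto simp: Wmat_def mat_of_rows_list_def mult_mat_vec_def scalar_prod_def row_def sum4 less_Suc_eq numeral_eq_Suc)
  done

lemma WTv: assumes "dim_vec v = 4"
  shows "transpose_mat (Wmat m1 m2 g e) *\<^sub>v v = vec_of_list [-v$1 - v$3,
     v$0 + of_real (2*m1)*v$1 + of_real (2*m1)*v$3,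
     - of_real (g^2*e) * v$1 - of_real (g^2*(1+e)) * v$3,
     - of_real (2*m2*g*e)*v$1 + v$2 - of_real (2*m2*g*(1+e))*v$3]"
  apply (rule eq_vecI)
  using assms apply (simp_all add: dimW)
  apply (auto simp: Wmat_def mat_of_rows_list_def mult_mat_vec_def scalar_prod_def row_def sum4 less_Suc_eq numeral_eq_Suc)
  done

lemma params:
  assumes "eps > 0"
  shows "2 * mu1_of eps = sqrt eps"
    "gam_of eps ^ 2 * eps = eps / (1+eps)"
    "2 * mu2_of eps * gam_of eps * eps = sqrt eps * eps / (1+eps)"
    "gam_of eps ^ 2 * (1+eps) = 1"
    "2 * mu2_of eps * gam_of eps * (1+eps) = sqrt eps"
proof -
  have E: "sqrt (1+eps) ^ 2 = 1 + eps" using assms by simp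
  have E0: "sqrt (1+eps) > 0" using assms by simp
  have m2: "mu2_of eps = sqrt eps / sqrt (1+eps) / 2" unfolding mu2_of_def by (simp add: real_sqrt_divide)
  show "2 * mu1_of eps = sqrt eps" unfolding mu1_of_def by simp
  show "gam_of eps ^ 2 * eps = eps / (1+eps)" unfolding gam_of_def using E by (simp add: power_divide)
  show "gam_of eps ^ 2 * (1+eps) = 1" unfolding gam_of_def using E assms by (simp add: power_divide)
  show "2 * mu2_of eps * gam_of eps * eps = sqrt eps * eps / (1+eps)"
    unfolding m2 gam_of_def using E E0 by (simp add: field_simps power2_eq_square)
  show "2 * mu2_of eps * gam_of eps * (1+eps) = sqrt eps"
    unfolding m2 gam_of_def using E E0 by (simp add: field_simps power2_eq_square)
qed



lemma case1:
  assumes eps: "eps > 0"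
    and ev: "eigenvector (Wmat (mu1_of eps) (mu2_of eps) (gam_of eps) eps) v \<i>"
    and lev: "left_eigenvector (Wmat (mu1_of eps) (mu2_of eps) (gam_of eps) eps) w \<i>"
    and wv0: "w \<bullet> v \<noteq> 0"
  shows "\<exists>k>0. \<forall>a3 b3. delta_nf (mu1_of eps) a3 b3 eps v w =
            k * ((- eps + 3*a3 - 3*b3*(1+eps)^2/eps)/(2*sqrt eps))"
proof -
  define s where "s = sqrt eps"
  define S where "S = complex_of_real s"
  have s0: "s > 0" using eps s_def by simp
  have s2: "s^2 = eps" using eps s_def by simp
  have S0: "S \<noteq> 0" using s0 S_def by simp
  have S2: "complex_of_real eps = S^2" using s2 S_def by (metis of_real_power)
  obtain II where II: "\<i> = II" by simp
  have I: "II * II = -1" using II[symmetric] by simp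
  define T where "T = 1/S"
  have T: "T*S = 1" using S0 T_def by simp
  have cT: "cnj T = T" "cnj S = S" unfolding T_def S_def by simp_all
  define F where "F = 1/(1+S^2)"
  have F: "F*(1+S^2) = 1" unfolding F_def S_def by (simp add: field_simps) (smt (verit) of_real_1 of_real_add of_real_eq_0_iff of_real_power power2_eq_square zero_le_power2)
  have pc: "complex_of_real (2*mu1_of eps) = S"
    "complex_of_real (gam_of eps ^ 2 * eps) = S^2 * F"
    "complex_of_real (2 * mu2_of eps * gam_of eps * eps) = S*S^2*F"
    "complex_of_real (gam_of eps ^ 2 * (1+eps)) = 1"
    "complex_of_real (2 * mu2_of eps * gam_of eps * (1+eps)) = S"
    using params[OF eps] S2 unfolding S_def s_def F_def by (simp_all add: field_simps)
  let ?W = "Wmat (mu1_of eps) (mu2_of eps) (gam_of eps) eps"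
  have dv: "dim_vec v = 4" and Wveq: "?W *\<^sub>v v = \<i> \<cdot>\<^sub>v v" and vnz: "v \<noteq> 0\<^sub>v 4"
    using ev unfolding eigenvector_def by (auto simp: dimW)
  have dw: "dim_vec w = 4" and Wweq: "transpose_mat ?W *\<^sub>v w = \<i> \<cdot>\<^sub>v w"
    using lev unfolding left_eigenvector_def eigenvector_def by (auto simp: dimW)
  have vc: "(?W *\<^sub>v v) $ k = \<i> * v$k" if "k < 4" for k using Wveq that dv by simp
  have wc: "(transpose_mat ?W *\<^sub>v w) $ k = \<i> * w$k" if "k < 4" for k using Wweq that dw by simp
  note Wv' = Wv[OF dv, of "mu1_of eps" "mu2_of eps" "gam_of eps" eps, unfolded pc]
  note WTv' = WTv[OF dw, of "mu1_of eps" "mu2_of eps" "gam_of eps" eps, unfolded pc]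
  have e0: "v$1 = \<i>*v$0" using vc[of 0] unfolding Wv' by (simp add: numeral_eq_Suc)
  have e2: "v$3 = \<i>*v$2" using vc[of 2] unfolding Wv' by (simp add: numeral_eq_Suc)
  have e3: "-v$0 + S*v$1 - 1*v$2 - S*v$3 = \<i>*v$3" using vc[of 3] unfolding Wv' by (simp add: numeral_eq_Suc)
  have c0: "-w$1 - w$3 = \<i>*w$0" using wc[of 0] unfolding WTv' by (simp add: numeral_eq_Suc)
  have c1: "w$0 + S*w$1 + S*w$3 = \<i>*w$1" using wc[of 1] unfolding WTv' by (simp add: numeral_eq_Suc)
  have c2: "- (S^2*F) * w$1 - 1 * w$3 = \<i>*w$2" using wc[of 2] unfolding WTv' by (simp add: numeral_eq_Suc)
  obtain x0 x1 x2 x3 y0 y1 y2 y3 where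
     X: "v$0 = x0" "v$1 = x1" "v$2 = x2" "v$3 = x3" and
     Y: "w$0 = y0" "w$1 = y1" "w$2 = y2" "w$3 = y3" by simp
  note e0 = e0[unfolded II X] and e2 = e2[unfolded II X] and e3 = e3[unfolded II X]
  note c0 = c0[unfolded II Y] and c1 = c1[unfolded II Y] and c2 = c2[unfolded II Y]
  have v2: "x2 = (1+II*T)*x0" using e0 e2 e3 I T by Groebner_Basis.algebra
  have v1: "x1 = II*x0" by (rule e0)
  have v3: "x3 = II*((1+II*T)*x0)" using e2 v2 by simp
  have w1: "y1 = (-II-S)*y0" using c0 c1 I by Groebner_Basis.algebra
  have w3: "y3 = S*y0" using c0 w1 I by Groebner_Basis.algebra
  have w2: "y2 = -II*(-(S^2*F)*y1 - y3)" using c2 I by Groebner_Basis.algebra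
  have cv1: "cnj (x1) = -II*cnj (x0)" using v1 II[symmetric] by simp
  have cv2: "cnj (x2) = (1-II*T)*cnj (x0)" using v2 cT II[symmetric] by simp
  have v0nz: "x0 \<noteq> 0"
  proof
    assume "x0 = 0"
    then have "v = 0\<^sub>v 4" using v1 v2 v3 dv X
      by (intro eq_vecI) (auto simp: less_Suc_eq numeral_eq_Suc)
    with vnz show False by simp
  qed
  have wvexp: "w \<bullet> v = y0*x0 + y1*x1 + y2*x2 + y3*x3"
    using dv X Y by (simp add: scalar_prod_def sum4)
  have w0nz: "y0 \<noteq> 0"
  proof
    assume "y0 = 0"
    then have "w \<bullet> v = 0" unfolding wvexp using w1 w2 w3 by simp
    with wv0 show False by simp
  qed
  define n where "n = cmod (x0) ^ 2"
  have n0: "n > 0" using v0nz n_def by simp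
  have nc: "x0 * cnj (x0) = complex_of_real n" unfolding n_def by (simp only: complex_norm_square)
  show ?thesis
  proof (intro exI[of _ n] conjI allI n0)
    fix a3 b3 :: real
    define A where "A = complex_of_real a3"
    define B where "B = complex_of_real b3"
    define Rr where "Rr = (- eps + 3*a3 - 3*b3*(1+eps)^2/eps)/(2*sqrt eps)"
    define Ti where "Ti = (1 + 3*a3 + 3*b3*(1+eps)^2/eps)/2"
    define X30 where "X30 = -s - b3*(4*eps-4)/s"
    define Y30 where "Y30 = a3 - b3*(-(eps^2)+6*eps-1)/eps"
    have Rr_r: "Rr*(2*s)*eps = -(eps^2) + 3*a3*eps - 3*b3*(1+eps)^2"
      unfolding Rr_def s_def using eps by (simp add: field_simps power2_eq_square)
    have Ti_r: "Ti*2*eps = eps + 3*a3*eps + 3*b3*(1+eps)^2"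
      unfolding Ti_def using eps by (simp add: field_simps power2_eq_square)
    have X_r: "X30*s = -eps - b3*(4*eps-4)"
      unfolding X30_def using s0 s2 by (simp add: field_simps power2_eq_square)
    have Y_r: "Y30*eps = a3*eps - b3*(-(eps^2)+6*eps-1)"
      unfolding Y30_def using eps by (simp add: field_simps power2_eq_square)
    have Rr_c: "complex_of_real Rr*(2*S)*complex_of_real eps = -(complex_of_real eps^2) + 3*A*complex_of_real eps - 3*B*(1+complex_of_real eps)^2"
      using arg_cong[OF Rr_r, of complex_of_real] unfolding S_def A_def B_def
      by (simp add: power2_eq_square)
    have Ti_c: "complex_of_real Ti*2*complex_of_real eps = complex_of_real eps + 3*A*complex_of_real eps + 3*B*(1+complex_of_real eps)^2"
      using arg_cong[OF Ti_r, of complex_of_real] unfolding S_def A_def B_def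
      by (simp add: power2_eq_square)
    have X_c: "complex_of_real X30*S = -complex_of_real eps - B*(4*complex_of_real eps-4)"
      using arg_cong[OF X_r, of complex_of_real] unfolding S_def A_def B_def
      by (simp add: power2_eq_square)
    have Y_c: "complex_of_real Y30*complex_of_real eps = A*complex_of_real eps - B*(-(complex_of_real eps^2)+6*complex_of_real eps-1)"
      using arg_cong[OF Y_r, of complex_of_real] unfolding S_def A_def B_def
      by (simp add: power2_eq_square)
    define K1 where "K1 = -(y1+y3)*(2*complex_of_real (mu1_of eps))"
    define K2 where "K2 = -(y1+y3)*complex_of_real a3"
    define K3 where "K3 = -complex_of_real b3*(complex_of_real eps*y1 + complex_of_real (1+eps)*y3)"
    have K1e: "K1 = -(y1+y3)*S" unfolding K1_def using pc(1) by simp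
    have K3e: "K3 = -B*(S^2*y1 + (1+S^2)*y3)" unfolding K3_def B_def using S2 by simp
    define p where "p = cub K1 K2 K3 (x0) (cnj (x0)) (x1) (cnj (x1)) (x2) (cnj (x2))"
    have rep: "w \<bullet> bnl (mu1_of eps) a3 b3 eps (z \<cdot>\<^sub>v v + zb \<cdot>\<^sub>v map_vec cnj v)
       = (\<Sum>j\<le>3. \<Sum>k\<le>3. p j k * z^j * zb^k)" for z zb
      unfolding P_expand[OF dv] p_def X Y cub_rep[symmetric] K1_def K2_def K3_def
      by (simp add: mult_ac)
    have p21': "p 2 1 = K1*(x0^2*cnj x1 + 2*x0*cnj x0*x1) + 3*K2*x0^2*cnj x0 + 3*K3*x2^2*cnj x2"
      unfolding p_def cub_def by simp
    have p21: "p 2 1 = (w \<bullet> v) * complex_of_real n * (complex_of_real Rr + II * complex_of_real Ti)"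
      using p21' unfolding wvexp K1e K2_def A_def[symmetric] K3e nc[symmetric]
      using v1 v2 v3 w1 w2 w3 cv1 cv2 Rr_c Ti_c I T F S2 by Groebner_Basis.algebra
    have p30': "p 3 0 = K1*x0^2*x1 + K2*x0^3 + K3*x2^3"
      unfolding p_def cub_def by simp
    have p30: "p 3 0 = y0*x0^3*(complex_of_real X30 + II * complex_of_real Y30)"
      using p30' unfolding K1e K2_def A_def[symmetric] K3e
      using v1 v2 v3 w1 w2 w3 X_c Y_c I T F S2 by Groebner_Basis.algebra
    have nz: "p 3 0 \<noteq> 0 \<or> p 2 1 \<noteq> 0"
    proof (cases "Rr = 0 \<and> Ti = 0")
      case True
      have h0: "eps*(1+eps) + 6*b3*(1+eps)^2 = 0" using Rr_r Ti_r True by (simp add: algebra_simps power2_eq_square)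
      have h1: "b3*(6*(1+eps)) = -eps"
      proof -
        have "(1+eps)*(eps + b3*(6*(1+eps))) = 0" using h0 by (simp add: algebra_simps power2_eq_square)
        then have "eps + b3*(6*(1+eps)) = 0" using eps by (simp only: mult_eq_0_iff) simp
        then show ?thesis by linarith
      qed
      have "X30 \<noteq> 0"
      proof
        assume "X30 = 0"
        then have h2: "b3*(4*eps-4) = -eps" using X_r by simp
        have "(b3*(6*(1+eps)))*(4*eps-4) = (b3*(4*eps-4))*(6*(1+eps))" by (simp add: algebra_simps)
        then have "(-eps)*(4*eps-4) = (-eps)*(6*(1+eps))" unfolding h1 h2 .
        then have "4*eps-4 = 6*(1+eps)" using eps by simp
        then show False using eps by simp
      qed
      then have "complex_of_real X30 + II * complex_of_real Y30 \<noteq> 0"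
        unfolding II[symmetric] by (simp add: complex_eq_iff)
      then show ?thesis using p30 w0nz v0nz by simp
    next
      case False
      then have "complex_of_real Rr + II * complex_of_real Ti \<noteq> 0"
        unfolding II[symmetric] by (simp add: complex_eq_iff)
      then show ?thesis using p21 wv0 n0 by simp
    qed
    have cz: "coeff_z2zb (\<lambda>z zb. w \<bullet> bnl (mu1_of eps) a3 b3 eps (z \<cdot>\<^sub>v v + zb \<cdot>\<^sub>v map_vec cnj v)) = p 2 1"
      by (rule coeff_rep[OF rep nz])
    have "c_lambda (mu1_of eps) a3 b3 eps v w = complex_of_real n * (complex_of_real Rr + \<i> * complex_of_real Ti)"
      unfolding c_lambda_def cz p21 II using wv0 by simp
    then show "delta_nf (mu1_of eps) a3 b3 eps v w = n * Rr"
      unfolding delta_nf_def by simp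
  qed
qed


lemma case2:
  assumes eps: "eps > 0"
    and ev: "eigenvector (Wmat (mu1_of eps) (mu2_of eps) (gam_of eps) eps) v (\<i> / complex_of_real (sqrt (1 + eps)))"
    and lev: "left_eigenvector (Wmat (mu1_of eps) (mu2_of eps) (gam_of eps) eps) w (\<i> / complex_of_real (sqrt (1 + eps)))"
    and wv0: "w \<bullet> v \<noteq> 0"
  shows "\<exists>k>0. \<forall>a3 b3. delta_nf (mu1_of eps) a3 b3 eps v w =
            k * (3*(-a3 + b3*(1+eps)^2/eps)/(2*sqrt eps))"
proof -
  define s where "s = sqrt eps"
  define S where "S = complex_of_real s"
  define r where "r = sqrt (1+eps)"
  define R where "R = complex_of_real r"
  have s0: "s > 0" using eps s_def by simp
  have s2: "s^2 = eps" using eps s_def by simp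
  have r0: "r > 0" using eps r_def by simp
  have r2: "r^2 = 1+eps" using eps r_def by simp
  have S0: "S \<noteq> 0" using s0 S_def by simp
  have R0: "R \<noteq> 0" using r0 R_def by simp
  have S2: "complex_of_real eps = S^2" using s2 S_def by (metis of_real_power)
  have R2: "R^2 = 1 + S^2" using r2 R_def S2 by (metis of_real_1 of_real_add of_real_power)
  obtain II where II: "\<i> = II" by simp
  have I: "II * II = -1" using II[symmetric] by simp
  define T where "T = 1/S"
  have T: "T*S = 1" using S0 T_def by simp
  define RI where "RI = 1/R"
  have RI: "RI*R = 1" using R0 RI_def by simp
  have cT: "cnj T = T" "cnj S = S" "cnj R = R" "cnj RI = RI" unfolding T_def S_def R_def RI_def by simp_all
  define F where "F = 1/(1+S^2)"
  have F: "F*(1+S^2) = 1" unfolding F_def S_def by (simp add: field_simps) (smt (verit) of_real_1 of_real_add of_real_eq_0_iff of_real_power power2_eq_square zero_le_power2)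
  have lam: "\<i> / complex_of_real (sqrt (1 + eps)) = II*RI" unfolding II RI_def R_def r_def by simp
  have pc: "complex_of_real (2*mu1_of eps) = S"
    "complex_of_real (gam_of eps ^ 2 * eps) = S^2 * F"
    "complex_of_real (2 * mu2_of eps * gam_of eps * eps) = S*S^2*F"
    "complex_of_real (gam_of eps ^ 2 * (1+eps)) = 1"
    "complex_of_real (2 * mu2_of eps * gam_of eps * (1+eps)) = S"
    using params[OF eps] S2 unfolding S_def s_def F_def by (simp_all add: field_simps)
  let ?W = "Wmat (mu1_of eps) (mu2_of eps) (gam_of eps) eps"
  let ?l = "\<i> / complex_of_real (sqrt (1 + eps))"
  have dv: "dim_vec v = 4" and Wveq: "?W *\<^sub>v v = ?l \<cdot>\<^sub>v v" and vnz: "v \<noteq> 0\<^sub>v 4"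
    using ev unfolding eigenvector_def by (auto simp: dimW)
  have dw: "dim_vec w = 4" and Wweq: "transpose_mat ?W *\<^sub>v w = ?l \<cdot>\<^sub>v w"
    using lev unfolding left_eigenvector_def eigenvector_def by (auto simp: dimW)
  have vc: "(?W *\<^sub>v v) $ k = II*RI * v$k" if "k < 4" for k using Wveq that dv lam by simp
  have wc: "(transpose_mat ?W *\<^sub>v w) $ k = II*RI * w$k" if "k < 4" for k using Wweq that dw lam by simp
  note Wv' = Wv[OF dv, of "mu1_of eps" "mu2_of eps" "gam_of eps" eps, unfolded pc]
  note WTv' = WTv[OF dw, of "mu1_of eps" "mu2_of eps" "gam_of eps" eps, unfolded pc]
  have e0: "v$1 = II*RI*v$0" using vc[of 0] unfolding Wv' by (simp add: numeral_eq_Suc)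
  have e2: "v$3 = II*RI*v$2" using vc[of 2] unfolding Wv' by (simp add: numeral_eq_Suc)
  have e3: "-v$0 + S*v$1 - 1*v$2 - S*v$3 = II*RI*v$3" using vc[of 3] unfolding Wv' by (simp add: numeral_eq_Suc)
  have c0: "-w$1 - w$3 = II*RI*w$0" using wc[of 0] unfolding WTv' by (simp add: numeral_eq_Suc)
  have c1: "w$0 + S*w$1 + S*w$3 = II*RI*w$1" using wc[of 1] unfolding WTv' by (simp add: numeral_eq_Suc)
  have c2: "- (S^2*F) * w$1 - 1 * w$3 = II*RI*w$2" using wc[of 2] unfolding WTv' by (simp add: numeral_eq_Suc)
  obtain x0 x1 x2 x3 y0 y1 y2 y3 where
     X: "v$0 = x0" "v$1 = x1" "v$2 = x2" "v$3 = x3" and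
     Y: "w$0 = y0" "w$1 = y1" "w$2 = y2" "w$3 = y3" by simp
  note e0 = e0[unfolded X] and e2 = e2[unfolded X] and e3 = e3[unfolded X]
  note c0 = c0[unfolded Y] and c1 = c1[unfolded Y] and c2 = c2[unfolded Y]
  define K where "K = (II*RI)^2 + S*(II*RI) + 1"
  have Kx: "K*x2 = (S*(II*RI) - 1)*x0" unfolding K_def using e0 e2 e3 I by Groebner_Basis.algebra
  have KL: "K*(II*R*T) = S*(II*RI) - 1" unfolding K_def using I T RI R2 by Groebner_Basis.algebra
  have K0: "K \<noteq> 0"
  proof -
    have "Im K = s / r" unfolding K_def II[symmetric] RI_def R_def S_def by (simp add: power2_eq_square)
    then have "Im K \<noteq> 0" using s0 r0 by simp
    then show ?thesis by auto
  qed
  have v2: "x2 = II*R*T*x0"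
  proof -
    have "K*x2 = K*(II*R*T*x0)" using Kx KL by (simp add: mult.assoc[symmetric])
    then show ?thesis using K0 by simp
  qed
  have v1: "x1 = II*RI*x0" by (rule e0)
  have v3: "x3 = II*RI*x2" by (rule e2)
  have w1: "y1 = (-II*R-S)*y0" using c0 c1 I RI by Groebner_Basis.algebra
  have w3: "y3 = (S+II*S^2*RI)*y0" using c0 w1 I RI R2 by Groebner_Basis.algebra
  have w2: "y2 = II*S*RI*y0" using c2 w1 w3 I RI R2 F by Groebner_Basis.algebra
  have cv1: "cnj (x1) = -II*RI*cnj (x0)" using v1 II[symmetric] cT by simp
  have cv2: "cnj (x2) = -II*R*T*cnj (x0)" using v2 cT II[symmetric] by simp
  have v0nz: "x0 \<noteq> 0"
  proof
    assume "x0 = 0"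
    then have "v = 0\<^sub>v 4" using v1 v2 v3 dv X
      by (intro eq_vecI) (auto simp: less_Suc_eq numeral_eq_Suc)
    with vnz show False by simp
  qed
  have wvexp: "w \<bullet> v = y0*x0 + y1*x1 + y2*x2 + y3*x3"
    using dv X Y by (simp add: scalar_prod_def sum4)
  have w0nz: "y0 \<noteq> 0"
  proof
    assume "y0 = 0"
    then have "w \<bullet> v = 0" unfolding wvexp using w1 w2 w3 by simp
    with wv0 show False by simp
  qed
  define n where "n = cmod (x0) ^ 2"
  have n0: "n > 0" using v0nz n_def by simp
  have nc: "x0 * cnj (x0) = complex_of_real n" unfolding n_def by (simp only: complex_norm_square)
  show ?thesis
  proof (intro exI[of _ n] conjI allI n0)
    fix a3 b3 :: real
    define A where "A = complex_of_real a3"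
    define B where "B = complex_of_real b3"
    define Rr where "Rr = 3*(-a3 + b3*(1+eps)^2/eps)/(2*sqrt eps)"
    define Ti where "Ti = -r/(2*(1+eps))"
    define X30 where "X30 = -s/(1+eps)"
    define Y30 where "Y30 = a3/r + b3*r^3/eps"
    have Rr_r: "Rr*(2*s)*eps = 3*(-a3*eps + b3*(1+eps)^2)"
      unfolding Rr_def s_def using eps by (simp add: field_simps power2_eq_square)
    have Ti_r: "Ti*2*(1+eps) = -r"
      unfolding Ti_def using eps by (simp add: field_simps)
    have X_r: "X30*(1+eps) = -s"
      unfolding X30_def using eps by (simp add: field_simps)
    have Y_r: "Y30*r*eps = a3*eps + b3*r^4"
      unfolding Y30_def using eps r0 by (simp add: field_simps power2_eq_square power4_eq_xxxx power3_eq_cube)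
    have Rr_c: "complex_of_real Rr*(2*S)*complex_of_real eps = 3*(-A*complex_of_real eps + B*(1+complex_of_real eps)^2)"
      using arg_cong[OF Rr_r, of complex_of_real] unfolding S_def A_def B_def
      by (simp add: power2_eq_square)
    have Ti_c: "complex_of_real Ti*2*(1+complex_of_real eps) = -R"
      using arg_cong[OF Ti_r, of complex_of_real] unfolding R_def
      by simp
    have X_c: "complex_of_real X30*(1+complex_of_real eps) = -S"
      using arg_cong[OF X_r, of complex_of_real] unfolding S_def
      by simp
    have Y_c: "complex_of_real Y30*R*complex_of_real eps = A*complex_of_real eps + B*R^4"
      using arg_cong[OF Y_r, of complex_of_real] unfolding R_def A_def B_def
      by simp
    define K1 where "K1 = -(w$1+w$3)*(2*complex_of_real (mu1_of eps))"
    define K2 where "K2 = -(w$1+w$3)*complex_of_real a3"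
    define K3 where "K3 = -complex_of_real b3*(complex_of_real eps*w$1 + complex_of_real (1+eps)*w$3)"
    have K1e: "K1 = -(y1+y3)*S" unfolding K1_def Y using pc(1) by simp
    have K3e: "K3 = -B*(S^2*y1 + (1+S^2)*y3)" unfolding K3_def B_def Y using S2 by simp
    define p where "p = cub K1 K2 K3 (v$0) (cnj (v$0)) (v$1) (cnj (v$1)) (v$2) (cnj (v$2))"
    have rep: "w \<bullet> bnl (mu1_of eps) a3 b3 eps (z \<cdot>\<^sub>v v + zb \<cdot>\<^sub>v map_vec cnj v)
       = (\<Sum>j\<le>3. \<Sum>k\<le>3. p j k * z^j * zb^k)" for z zb
      unfolding P_expand[OF dv] p_def cub_rep[symmetric] K1_def K2_def K3_def
      by (simp add: mult_ac)
    have p21': "p 2 1 = K1*(x0^2*cnj x1 + 2*x0*cnj x0*x1) + 3*K2*x0^2*cnj x0 + 3*K3*x2^2*cnj x2"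
      unfolding p_def cub_def X by simp
    have p21: "p 2 1 = (w \<bullet> v) * complex_of_real n * (complex_of_real Rr + II * complex_of_real Ti)"
      using p21' unfolding wvexp K1e K2_def Y A_def[symmetric] K3e nc[symmetric]
      using v1 v2 v3 w1 w2 w3 cv1 cv2 Rr_c Ti_c I T F S2 R2 RI by Groebner_Basis.algebra
    have p30': "p 3 0 = K1*x0^2*x1 + K2*x0^3 + K3*x2^3"
      unfolding p_def cub_def X by simp
    have p30: "p 3 0 = y0*x0^3*(complex_of_real X30 + II * complex_of_real Y30)"
      using p30' unfolding K1e K2_def Y A_def[symmetric] K3e
      using v1 v2 v3 w1 w2 w3 X_c Y_c I T F S2 R2 RI by Groebner_Basis.algebra
    have nz: "p 3 0 \<noteq> 0 \<or> p 2 1 \<noteq> 0"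
    proof -
      have "X30 \<noteq> 0" unfolding X30_def using s0 eps by simp
      then have "complex_of_real X30 + II * complex_of_real Y30 \<noteq> 0"
        unfolding II[symmetric] by (simp add: complex_eq_iff)
      then show ?thesis using p30 w0nz v0nz by simp
    qed
    have cz: "coeff_z2zb (\<lambda>z zb. w \<bullet> bnl (mu1_of eps) a3 b3 eps (z \<cdot>\<^sub>v v + zb \<cdot>\<^sub>v map_vec cnj v)) = p 2 1"
      by (rule coeff_rep[OF rep nz])
    have "c_lambda (mu1_of eps) a3 b3 eps v w = complex_of_real n * (complex_of_real Rr + \<i> * complex_of_real Ti)"
      unfolding c_lambda_def cz p21 II using wv0 by simp
    then show "delta_nf (mu1_of eps) a3 b3 eps v w = n * Rr"
      unfolding delta_nf_def Rr_def by simp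
  qed
qed

lemma keyA: fixes s k aa bb E :: real assumes "s > 0" "E > 0"
  shows "k*((-(s*s) + 3*aa - 3*bb*E^2/(s*s))/(2*s)) = (k*E/(2*(s*s))) * (-(s*s)*s/E + 3*s/E*aa - 3*E/s*bb)"
  using assms by (simp add: field_simps power2_eq_square)
lemma keyB: fixes s k aa E :: real assumes "s > 0" "E > 0"
  shows "k*((-(s*s) + 3*aa - 3*((s*s)/E^2*aa)*E^2/(s*s))/(2*s)) = -(k*E/(2*(s*s))) * ((s*s)*s/E)"
  using assms by (simp add: field_simps power2_eq_square)
lemma keyC: fixes s k aa bb E :: real assumes "s > 0"
  shows "k*(3*(-aa + bb*E^2/(s*s))/(2*s)) = (3*k/(2*(s*s))) * (-s*aa + E^2/s*bb)"
  using assms by (simp add: field_simps power2_eq_square)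
lemma keyD: fixes s k aa E :: real assumes "s > 0" "E > 0"
  shows "k*(3*(-aa + ((s*s)/E^2*aa)*E^2/(s*s))/(2*s)) = 0"
  using assms by (simp add: field_simps power2_eq_square)

theorem mainTheorem2:
  fixes eps :: real
  assumes "eps > 0"
  defines "W \<equiv> Wmat (mu1_of eps) (mu2_of eps) (gam_of eps) eps"
  shows
   "(\<forall>v w. eigenvector W v \<i> \<and> left_eigenvector W w \<i> \<and> w \<bullet> v \<noteq> 0 \<longrightarrow>
      (\<exists>\<kappa>1>0.
         (\<forall>a3 b3. delta_nf (mu1_of eps) a3 b3 eps v w =
            \<kappa>1 * (- eps * sqrt eps / (1 + eps) + 3 * sqrt eps / (1 + eps) * a3
                   - 3 * (1 + eps) / sqrt eps * b3)) \<and>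
         (\<forall>a3. delta_nf (mu1_of eps) a3 (eps / (1 + eps)^2 * a3) eps v w =
                  - \<kappa>1 * (eps * sqrt eps / (1 + eps)) \<and>
                delta_nf (mu1_of eps) a3 (eps / (1 + eps)^2 * a3) eps v w < 0)))
    \<and>
    (\<forall>v w. eigenvector W v (\<i> / complex_of_real (sqrt (1 + eps))) \<and>
           left_eigenvector W w (\<i> / complex_of_real (sqrt (1 + eps))) \<and> w \<bullet> v \<noteq> 0 \<longrightarrow>
      (\<exists>\<kappa>2>0.
         (\<forall>a3 b3. delta_nf (mu1_of eps) a3 b3 eps v w =
            \<kappa>2 * (- sqrt eps * a3 + (1 + eps)^2 / sqrt eps * b3)) \<and>
         (\<forall>a3. delta_nf (mu1_of eps) a3 (eps / (1 + eps)^2 * a3) eps v w = 0)))"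
  proof -
  have se: "sqrt eps * sqrt eps = eps" using assms(1) by simp
  have sp: "sqrt eps > 0" using assms(1) by simp
  have E0: "1 + eps > 0" using assms(1) by simp
  show ?thesis
  proof (intro conjI allI impI)
    fix v w assume h: "eigenvector W v \<i> \<and> left_eigenvector W w \<i> \<and> w \<bullet> v \<noteq> 0"
    obtain k where k0: "k > 0" and hk: "\<And>a3 b3. delta_nf (mu1_of eps) a3 b3 eps v w =
            k * ((- eps + 3*a3 - 3*b3*(1+eps)^2/eps)/(2*sqrt eps))"
      using case1[OF assms(1)] h unfolding W_def by blast
    define \<kappa> where "\<kappa> = k*(1+eps)/(2*eps)"
    have kp: "\<kappa> > 0" unfolding \<kappa>_def using k0 assms(1) by simp
    have key: "delta_nf (mu1_of eps) a3 b3 eps v w =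
            \<kappa> * (- eps * sqrt eps / (1 + eps) + 3 * sqrt eps / (1 + eps) * a3
                   - 3 * (1 + eps) / sqrt eps * b3)" for a3 b3
      unfolding hk \<kappa>_def by (rule keyA[where k=k and aa=a3 and bb=b3, OF sp E0, unfolded se])
    have key2: "delta_nf (mu1_of eps) a3 (eps / (1 + eps)^2 * a3) eps v w =
                  - \<kappa> * (eps * sqrt eps / (1 + eps))" for a3
      unfolding hk \<kappa>_def by (rule keyB[where k=k and aa=a3, OF sp E0, unfolded se])
    have neg: "- \<kappa> * (eps * sqrt eps / (1 + eps)) < 0" using kp sp assms(1) by simp
    show "\<exists>\<kappa>1>0.
         (\<forall>a3 b3. delta_nf (mu1_of eps) a3 b3 eps v w =
            \<kappa>1 * (- eps * sqrt eps / (1 + eps) + 3 * sqrt eps / (1 + eps) * a3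
                   - 3 * (1 + eps) / sqrt eps * b3)) \<and>
         (\<forall>a3. delta_nf (mu1_of eps) a3 (eps / (1 + eps)^2 * a3) eps v w =
                  - \<kappa>1 * (eps * sqrt eps / (1 + eps)) \<and>
                delta_nf (mu1_of eps) a3 (eps / (1 + eps)^2 * a3) eps v w < 0)"
      using kp key key2 neg by metis
  next
    fix v w assume h: "eigenvector W v (\<i> / complex_of_real (sqrt (1 + eps))) \<and>
           left_eigenvector W w (\<i> / complex_of_real (sqrt (1 + eps))) \<and> w \<bullet> v \<noteq> 0"
    obtain k where k0: "k > 0" and hk: "\<And>a3 b3. delta_nf (mu1_of eps) a3 b3 eps v w =
            k * (3*(-a3 + b3*(1+eps)^2/eps)/(2*sqrt eps))"
      using case2[OF assms(1)] h unfolding W_def by blast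
    define \<kappa> where "\<kappa> = 3*k/(2*eps)"
    have kp: "\<kappa> > 0" unfolding \<kappa>_def using k0 assms(1) by simp
    have key: "delta_nf (mu1_of eps) a3 b3 eps v w =
            \<kappa> * (- sqrt eps * a3 + (1 + eps)^2 / sqrt eps * b3)" for a3 b3
      unfolding hk \<kappa>_def by (rule keyC[where k=k and aa=a3 and bb=b3 and E="1+eps", OF sp, unfolded se])
    have key2: "delta_nf (mu1_of eps) a3 (eps / (1 + eps)^2 * a3) eps v w = 0" for a3
      unfolding hk by (rule keyD[where k=k and aa=a3, OF sp E0, unfolded se])
    show "\<exists>\<kappa>2>0.
         (\<forall>a3 b3. delta_nf (mu1_of eps) a3 b3 eps v w =
            \<kappa>2 * (- sqrt eps * a3 + (1 + eps)^2 / sqrt eps * b3)) \<and>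
         (\<forall>a3. delta_nf (mu1_of eps) a3 (eps / (1 + eps)^2 * a3) eps v w = 0)"
      using kp key key2 by metis
  qed
qed

end
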